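(* Let $K$ be a Henselian valued field and $f(x)=\sum_{i=0}^d a_ix^i$ a nonzero polynomial with coefficients in $K$. Let $N$ be a positive integer and $\xi\in\mathrm{RV}_N^\times$. Suppose that \[\mathrm{ord}\Big(\sum_{i=1}^d\mathrm{rv}_N(ia_i)\xi^{i-1}\Big)\le\min_{1\le i\le d}\mathrm{ord}(a_i\xi^{i-1})+\mathrm{ord}\,N,\] and that there exists $\tilde\xi\in\mathrm{RV}_{N^2}$ with $\mathrm{rv}_N(\tilde\xi)=\xi$ and \[0\in\sum_{i=0}^d\mathrm{rv}_{N^2}(a_i)\tilde\xi^i.\] Then there exists a unique $x_0\in K$ with $\mathrm{rv}_N(x_0)=\xi$ and $f(x_0)=0$.
   Context: For a valued field $K$ with valuation ring $\mathcal{O}_K$, maximal ideal $\mathcal{M}_K$, additive value group $\Gamma$ and valuation $\mathrm{ord}\colon K^\times\to\Gamma$ (with $\mathrm{ord}\,0=\infty$), and a positive integer $N$: $\mathrm{RV}_N^\times=K^\times/(1+N\mathcal{M}_K)$ (a multiplicative group), $\mathrm{RV}_N=\mathrm{RV}_N^\times\cup\{0\}$ with multiplication extended by $0$, $\mathrm{rv}_N\colon K\to\mathrm{RV}_N$ the projection with $\mathrm{rv}_N(0)=0$, and for $N\mid M$ the induced map $\mathrm{rv}_N\colon\mathrm{RV}_M\to\mathrm{RV}_N$. The valuation factors through $\mathrm{ord}\colon\mathrm{RV}_N^\times\to\Gamma$. For $\xi_0,\dots,\xi_d\in\mathrm{RV}_N$, $\sum_{i}\xi_i$ denotes the set $\{\mathrm{rv}_N(x_0+\dots+x_d)\mid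 x_i\in K,\ \mathrm{rv}_N(x_i)=\xi_i\}\subseteq\mathrm{RV}_N$. For $A\subseteq\mathrm{RV}_N$ and $\delta\in\Gamma$, $\mathrm{ord}(A)\le\delta$ means $\mathrm{ord}(x)\le\delta$ for all $x\in A$. *)

theory Defs
  imports "HOL-Computational_Algebra.Polynomial" "HOL-Library.Extended"
begin

(* A (Krull) valuation on a field 'a with values in an ordered abelian group 'g.
   v is only meaningful on nonzero elements; ord 0 = infinity is modelled by vord below. *)
definition valuation :: "('a::field \<Rightarrow> 'g::linordered_ab_group_add) \<Rightarrow> bool" where
  "valuation v \<longleftrightarrow>
     (\<forall>x y. x \<noteq> 0 \<longrightarrow> y \<noteq> 0 \<longrightarrow> v (x * y) = v x + v y) \<and>
     (\<forall>x y. x \<noteq> 0 \<longrightarrow> y \<noteq> 0 \<longrightarrow> x + y \<noteq> 0 \<longrightarrow> min (v x) (v y) \<le> v (x + y))"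

definition valring :: "('a::field \<Rightarrow> 'g::linordered_ab_group_add) \<Rightarrow> 'a set" where
  "valring v = {x. x = 0 \<or> 0 \<le> v x}"

definition maxideal :: "('a::field \<Rightarrow> 'g::linordered_ab_group_add) \<Rightarrow> 'a set" where
  "maxideal v = {x. x = 0 \<or> 0 < v x}"

definition vord :: "('a::field \<Rightarrow> 'g::linordered_ab_group_add) \<Rightarrow> 'a \<Rightarrow> 'g extended" where
  "vord v x = (if x = 0 then Pinf else Fin (v x))"

definition henselian :: "('a::field \<Rightarrow> 'g::linordered_ab_group_add) \<Rightarrow> bool" where
  "henselian v \<longleftrightarrow>
     (\<forall>f :: 'a poly. \<forall>a. (\<forall>i. coeff f i \<in> valring v) \<longrightarrow> a \<in> valring v \<longrightarrow>
        poly f a \<in> maxideal v \<longrightarrow> poly (pderiv f) a \<notin> maxideal v \<longrightarrow>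
        (\<exists>b \<in> valring v. poly f b = 0 \<and> b - a \<in> maxideal v))"

definition henselian_valued_field :: "('a::field \<Rightarrow> 'g::linordered_ab_group_add) \<Rightarrow> bool" where
  "henselian_valued_field v \<longleftrightarrow> valuation v \<and> henselian v"

(* rv_N(x): the class of x in RV_N = K^x/(1 + N M_K) \<union> {0}, as a subset of K *)
definition rv :: "('a::field \<Rightarrow> 'g::linordered_ab_group_add) \<Rightarrow> nat \<Rightarrow> 'a \<Rightarrow> 'a set" where
  "rv v N x = (if x = 0 then {0}
               else {x * (1 + of_nat N * m) | m. m \<in> maxideal v})"

definition RV :: "('a::field \<Rightarrow> 'g::linordered_ab_group_add) \<Rightarrow> nat \<Rightarrow> 'a set set" where
  "RV v N = range (rv v N)"

definition RVx :: "('a::field \<Rightarrow> 'g::linordered_ab_group_add) \<Rightarrow> nat \<Rightarrow> 'a set set" where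
  "RVx v N = RV v N - {{0}}"

definition rv_mul :: "'a::field set \<Rightarrow> 'a set \<Rightarrow> 'a set" where
  "rv_mul A B = {x * y | x y. x \<in> A \<and> y \<in> B}"

primrec rv_pow :: "('a::field \<Rightarrow> 'g::linordered_ab_group_add) \<Rightarrow> nat \<Rightarrow> 'a set \<Rightarrow> nat \<Rightarrow> 'a set" where
  "rv_pow v N A 0 = rv v N 1"
| "rv_pow v N A (Suc n) = rv_mul A (rv_pow v N A n)"

(* induced map rv_N : RV_M \<rightarrow> RV_N (for N dvd M) *)
definition rv_res :: "('a::field \<Rightarrow> 'g::linordered_ab_group_add) \<Rightarrow> nat \<Rightarrow> 'a set \<Rightarrow> 'a set" where
  "rv_res v N A = rv v N (SOME x. x \<in> A)"

definition rv_ord :: "('a::field \<Rightarrow> 'g::linordered_ab_group_add) \<Rightarrow> 'a set \<Rightarrow> 'g extended" where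
  "rv_ord v A = vord v (SOME x. x \<in> A)"

definition rv_sum :: "('a::field \<Rightarrow> 'g::linordered_ab_group_add) \<Rightarrow> nat \<Rightarrow> nat set \<Rightarrow> (nat \<Rightarrow> 'a set) \<Rightarrow> 'a set set" where
  "rv_sum v N I \<xi> = {rv v N (\<Sum>i\<in>I. x i) | x. \<forall>i\<in>I. rv v N (x i) = \<xi> i}"

end

theory Submission
  imports Defs
begin


context
  fixes v :: "'a::field \<Rightarrow> 'g::linordered_ab_group_add"
  assumes V: "valuation v"
begin

lemma vmul: "x \<noteq> 0 \<Longrightarrow> y \<noteq> 0 \<Longrightarrow> v (x * y) = v x + v y"
  using V unfolding valuation_def by blast

lemma vadd: "x \<noteq> 0 \<Longrightarrow> y \<noteq> 0 \<Longrightarrow> x + y \<noteq> 0 \<Longrightarrow> min (v x) (v y) \<le> v (x + y)"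
  using V unfolding valuation_def by blast

lemma v1: "v 1 = 0"
  using vmul[of 1 1] by simp

lemma vm1: "v (-1) = 0"
proof -
  have "v (-1) + v (-1) = 0" using vmul[of "-1" "-1"] v1 by simp
  then show ?thesis
    by (metis add_neg_neg add_pos_pos less_irrefl linorder_neqE)
qed

lemma vneg: "v (- x) = v x"
proof (cases "x = 0")
  case False
  then show ?thesis using vmul[of "-1" x] vm1 by simp
qed simp

lemma vdiv: "x \<noteq> 0 \<Longrightarrow> y \<noteq> 0 \<Longrightarrow> v (y / x) = v y - v x"
  using vmul[of "y/x" x] by (simp add: algebra_simps)

lemma O_add: "x \<in> valring v \<Longrightarrow> y \<in> valring v \<Longrightarrow> x + y \<in> valring v"
  unfolding valring_def
  apply (cases "x = 0"; cases "y = 0"; cases "x + y = 0")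
  using vadd[of x y] by (auto simp: min_def split: if_splits)

lemma O_neg: "x \<in> valring v \<Longrightarrow> - x \<in> valring v"
  unfolding valring_def using vneg by auto

lemma O_diff: "x \<in> valring v \<Longrightarrow> y \<in> valring v \<Longrightarrow> x - y \<in> valring v"
  using O_add O_neg by (metis diff_conv_add_uminus)

lemma O_mul: "x \<in> valring v \<Longrightarrow> y \<in> valring v \<Longrightarrow> x * y \<in> valring v"
  unfolding valring_def
  apply (cases "x = 0"; cases "y = 0")
  using vmul[of x y] by auto

lemma O_0: "0 \<in> valring v" and O_1: "1 \<in> valring v"
  unfolding valring_def using v1 by auto

lemma O_nat: "of_nat n \<in> valring v"
  by (induction n) (auto intro: O_add O_0 O_1)

lemma O_sum: "(\<And>i. i \<in> I \<Longrightarrow> f i \<in> valring v) \<Longrightarrow> sum f I \<in> valring v"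
  by (induction I rule: infinite_finite_induct) (auto intro: O_add O_0)

lemma O_pow: "x \<in> valring v \<Longrightarrow> x ^ n \<in> valring v"
  by (induction n) (auto intro: O_mul O_1)

lemma M_O: "x \<in> maxideal v \<Longrightarrow> x \<in> valring v"
  unfolding valring_def maxideal_def by auto

lemma M_add: "x \<in> maxideal v \<Longrightarrow> y \<in> maxideal v \<Longrightarrow> x + y \<in> maxideal v"
  unfolding maxideal_def
  apply (cases "x = 0"; cases "y = 0"; cases "x + y = 0")
  using vadd[of x y] by (auto simp: min_def split: if_splits)

lemma M_neg: "x \<in> maxideal v \<Longrightarrow> - x \<in> maxideal v"
  unfolding maxideal_def using vneg by auto

lemma M_diff: "x \<in> maxideal v \<Longrightarrow> y \<in> maxideal v \<Longrightarrow> x - y \<in> maxideal v"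
  using M_add M_neg by (metis diff_conv_add_uminus)

lemma M_mul: "x \<in> valring v \<Longrightarrow> y \<in> maxideal v \<Longrightarrow> x * y \<in> maxideal v"
  unfolding valring_def maxideal_def
  apply (cases "x = 0"; cases "y = 0")
  using vmul[of x y] by (auto simp: add_nonneg_pos)

lemma M_mul': "y \<in> maxideal v \<Longrightarrow> x \<in> valring v \<Longrightarrow> y * x \<in> maxideal v"
  using M_mul by (metis mult.commute)

lemma M_0: "0 \<in> maxideal v"
  unfolding maxideal_def by auto

lemma M_sum: "(\<And>i. i \<in> I \<Longrightarrow> f i \<in> maxideal v) \<Longrightarrow> sum f I \<in> maxideal v"
  by (induction I rule: infinite_finite_induct) (auto intro: M_add M_0)

lemma one_notin_M: "1 \<notin> maxideal v"
  unfolding maxideal_def using v1 by auto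

lemma unit_nz: "m \<in> maxideal v \<Longrightarrow> 1 + m \<noteq> 0"
  using one_notin_M M_neg by (metis add_eq_0_iff minus_minus)

lemma unit_v: "m \<in> maxideal v \<Longrightarrow> v (1 + m) = 0"
proof -
  assume m: "m \<in> maxideal v"
  have nz: "1 + m \<noteq> 0" using unit_nz m .
  have ge: "0 \<le> v (1 + m)"
    using M_O[OF m] O_add[OF O_1 M_O[OF m]] nz unfolding valring_def by auto
  show ?thesis
  proof (rule ccontr)
    assume "v (1 + m) \<noteq> 0"
    then have "1 + m \<in> maxideal v" using ge nz unfolding maxideal_def by auto
    then have "(1 + m) - m \<in> maxideal v" using M_diff m by blast
    then show False using one_notin_M by simp
  qed
qed

lemma unit_O: "m \<in> maxideal v \<Longrightarrow> x * (1 + m) \<in> valring v \<Longrightarrow> x \<in> valring v"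
  unfolding valring_def using vmul[of x "1+m"] unit_v[of m] unit_nz[of m]
  by (cases "x = 0") auto

lemma O_div: "x \<noteq> 0 \<Longrightarrow> y \<noteq> 0 \<Longrightarrow> v x \<le> v y \<Longrightarrow> y / x \<in> valring v"
  unfolding valring_def using vdiv by auto


lemma inv_unit_O: "m \<in> maxideal v \<Longrightarrow> 1 / (1 + m) \<in> valring v"
  using unit_O[of m "1 / (1 + m)"] unit_nz[of m] O_1 by simp

lemma rv_form: "y \<in> rv v N x \<longleftrightarrow> (\<exists>m \<in> maxideal v. y = x * (1 + of_nat N * m))"
  unfolding rv_def using M_0 by auto

lemma rv_mem: "x \<in> rv v N x"
  using rv_form M_0 by fastforce

lemma rv_eq: assumes "y \<in> rv v N x" shows "rv v N y = rv v N x"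
proof -
  obtain m where m: "m \<in> maxideal v" "y = x * (1 + of_nat N * m)"
    using assms rv_form by blast
  have Nm: "of_nat N * m \<in> maxideal v" using M_mul[OF O_nat m(1)] .
  have u: "1 + of_nat N * m \<noteq> 0" using unit_nz[OF Nm] .
  show ?thesis
  proof (rule set_eqI)
    fix z
    show "z \<in> rv v N y \<longleftrightarrow> z \<in> rv v N x"
    proof
      assume "z \<in> rv v N y"
      then obtain m' where m': "m' \<in> maxideal v" "z = y * (1 + of_nat N * m')"
        using rv_form by blast
      have "z = x * (1 + of_nat N * (m + m' + of_nat N * m * m'))"
        using m m' by (simp add: algebra_simps)
      moreover have "m + m' + of_nat N * m * m' \<in> maxideal v"
        using m(1) m'(1) by (intro M_add M_mul O_mul O_nat M_O)
      ultimately show "z \<in> rv v N x" using rv_form by blast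
    next
      assume "z \<in> rv v N x"
      then obtain m'' where m'': "m'' \<in> maxideal v" "z = x * (1 + of_nat N * m'')"
        using rv_form by blast
      define m' where "m' = (m'' - m) / (1 + of_nat N * m)"
      have "m' \<in> maxideal v"
        unfolding m'_def divide_inverse
        using M_mul'[OF M_diff[OF m''(1) m(1)] inv_unit_O[OF Nm]] by (simp add: divide_inverse)
      moreover have "z = y * (1 + of_nat N * m')"
        using m m'' u unfolding m'_def by (simp add: field_simps)
      ultimately show "z \<in> rv v N y" using rv_form by blast
    qed
  qed
qed

lemma rv_iff: "rv v N x = rv v N y \<longleftrightarrow> y \<in> rv v N x"
  using rv_eq rv_mem by metis

lemma rv_zero: "rv v N x = {0} \<longleftrightarrow> x = 0"
  using rv_mem[of x N] unfolding rv_def by auto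

lemma rv_mul_rv: "rv_mul (rv v N x) (rv v N y) = rv v N (x * y)"
proof (rule set_eqI)
  fix z
  show "z \<in> rv_mul (rv v N x) (rv v N y) \<longleftrightarrow> z \<in> rv v N (x * y)"
  proof
    assume "z \<in> rv_mul (rv v N x) (rv v N y)"
    then obtain a b where ab: "z = a * b" "a \<in> rv v N x" "b \<in> rv v N y"
      unfolding rv_mul_def by blast
    obtain m where m: "m \<in> maxideal v" "a = x * (1 + of_nat N * m)" using ab rv_form by blast
    obtain m' where m': "m' \<in> maxideal v" "b = y * (1 + of_nat N * m')" using ab rv_form by blast
    have "z = x * y * (1 + of_nat N * (m + m' + of_nat N * m * m'))"
      using ab m m' by (simp add: algebra_simps)
    moreover have "m + m' + of_nat N * m * m' \<in> maxideal v"
      using m(1) m'(1) by (intro M_add M_mul O_mul O_nat M_O)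
    ultimately show "z \<in> rv v N (x * y)" using rv_form by blast
  next
    assume "z \<in> rv v N (x * y)"
    then obtain m where m: "m \<in> maxideal v" "z = x * y * (1 + of_nat N * m)" using rv_form by blast
    have "x * (1 + of_nat N * m) \<in> rv v N x" using rv_form m by blast
    moreover have "z = (x * (1 + of_nat N * m)) * y" using m by (simp add: algebra_simps)
    ultimately show "z \<in> rv_mul (rv v N x) (rv v N y)"
      unfolding rv_mul_def using rv_mem by blast
  qed
qed

lemma rv_pow_rv: "rv_pow v N (rv v N x) k = rv v N (x ^ k)"
  by (induction k) (simp_all add: rv_mul_rv)

lemma vord_unit: "m \<in> maxideal v \<Longrightarrow> vord v (x * (1 + of_nat N * m)) = vord v x"
proof -
  assume m: "m \<in> maxideal v"
  have Nm: "of_nat N * m \<in> maxideal v" using M_mul[OF O_nat m] .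
  show ?thesis
    unfolding vord_def using unit_nz[OF Nm] unit_v[OF Nm] vmul[of x "1 + of_nat N * m"] by auto
qed

lemma rv_ord_rv: "rv_ord v (rv v N x) = vord v x"
proof -
  have "(SOME y. y \<in> rv v N x) \<in> rv v N x" using rv_mem by (rule someI)
  then obtain m where "m \<in> maxideal v" "(SOME y. y \<in> rv v N x) = x * (1 + of_nat N * m)"
    using rv_form by blast
  then show ?thesis unfolding rv_ord_def using vord_unit by simp
qed

lemma rv_res_rv: "rv_res v N (rv v (N^2) t) = rv v N t"
proof -
  have "(SOME y. y \<in> rv v (N^2) t) \<in> rv v (N^2) t" using rv_mem by (rule someI)
  then obtain m where m: "m \<in> maxideal v" "(SOME y. y \<in> rv v (N^2) t) = t * (1 + of_nat (N^2) * m)"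
    using rv_form by blast
  have "of_nat N * m \<in> maxideal v" using M_mul[OF O_nat m(1)] .
  moreover have "t * (1 + of_nat (N^2) * m) = t * (1 + of_nat N * (of_nat N * m))"
    by (simp add: power2_eq_square algebra_simps)
  ultimately have "(SOME y. y \<in> rv v (N^2) t) \<in> rv v N t" using m(2) rv_form by metis
  then show ?thesis unfolding rv_res_def using rv_eq by blast
qed


lemma M_pow: "x \<in> maxideal v \<Longrightarrow> k \<ge> 1 \<Longrightarrow> x ^ k \<in> maxideal v"
proof -
  assume x: "x \<in> maxideal v" and k: "k \<ge> 1"
  have "x ^ k = x * x ^ (k - 1)" using k by (simp add: power_eq_if)
  then show ?thesis using M_mul'[OF x O_pow[OF M_O[OF x]]] by simp
qed

end


theorem lemma2p8:
  fixes v :: "'a::field \<Rightarrow> 'g::linordered_ab_group_add"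
    and f :: "'a poly" and N :: nat and \<xi> :: "'a set"
  assumes "henselian_valued_field v"
    and "f \<noteq> 0"
    and "N > 0"
    and "\<xi> \<in> RVx v N"
    and "\<forall>\<eta> \<in> rv_sum v N {1..degree f}
            (\<lambda>i. rv_mul (rv v N (of_nat i * coeff f i)) (rv_pow v N \<xi> (i - 1))).
          rv_ord v \<eta> \<le>
            Min ({rv_ord v (rv_mul (rv v N (coeff f i)) (rv_pow v N \<xi> (i - 1))) | i. 1 \<le> i \<and> i \<le> degree f}
                 \<union> {Pinf}) + vord v (of_nat N)"
    and "\<exists>\<xi>' \<in> RV v (N^2). rv_res v N \<xi>' = \<xi> \<and>
          {0} \<in> rv_sum v (N^2) {0..degree f}
                  (\<lambda>i. rv_mul (rv v (N^2) (coeff f i)) (rv_pow v (N^2) \<xi>' i))"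
  shows "\<exists>!x0. rv v N x0 = \<xi> \<and> poly f x0 = 0"
proof -
  have V: "valuation v" and H: "henselian v" using assms(1) unfolding henselian_valued_field_def by auto
  define d where "d = degree f"
  define a where "a = coeff f"
  define n :: 'a where "n = of_nat N"
  have polyf: "poly f x = (\<Sum>i\<in>{0..d}. a i * x ^ i)" for x
    unfolding poly_altdef a_def d_def by (simp add: atLeast0AtMost)
  obtain \<xi>' where \<xi>': "\<xi>' \<in> RV v (N^2)" "rv_res v N \<xi>' = \<xi>"
    "{0} \<in> rv_sum v (N^2) {0..d} (\<lambda>i. rv_mul (rv v (N^2) (a i)) (rv_pow v (N^2) \<xi>' i))"
    using assms(6) unfolding a_def d_def by blast
  obtain t where t: "\<xi>' = rv v (N^2) t" using \<xi>'(1) unfolding RV_def by blast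
  have xi: "\<xi> = rv v N t" using \<xi>'(2) t rv_res_rv[OF V] by simp
  have "t \<noteq> 0" using assms(4) xi rv_zero[OF V] unfolding RVx_def by auto
  obtain y where y: "rv v (N^2) (sum y {0..d}) = {0}"
     "\<forall>i\<in>{0..d}. rv v (N^2) (y i) = rv v (N^2) (a i * t ^ i)"
    using \<xi>'(3) unfolding t rv_sum_def by (auto simp: rv_pow_rv[OF V] rv_mul_rv[OF V])
  have sy: "sum y {0..d} = 0" using y(1) rv_zero[OF V] by blast
  have "\<forall>i\<in>{0..d}. \<exists>mi \<in> maxideal v. y i = a i * t ^ i * (1 + n^2 * mi)"
    using y(2) rv_iff[OF V] rv_form[OF V] unfolding n_def by (metis of_nat_power)
  then obtain m where m: "\<And>i. i \<in> {0..d} \<Longrightarrow> m i \<in> maxideal v"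
     "\<And>i. i \<in> {0..d} \<Longrightarrow> y i = a i * t ^ i * (1 + n^2 * m i)"
    by metis
  have key1: "(\<Sum>i\<in>{0..d}. a i * t ^ i * (1 + n^2 * m i)) = 0"
    using sy m(2) by simp
  have ft: "poly f t = - (n^2 * (\<Sum>i\<in>{0..d}. a i * t ^ i * m i))"
    using key1 unfolding polyf
    by (simp add: algebra_simps sum.distrib sum_distrib_left eq_neg_iff_add_eq_0)
  have uniq_form: "\<exists>z \<in> maxideal v. x1 = t * (1 + n * z)" if "rv v N x1 = \<xi>" for x1
    using that xi rv_iff[OF V] rv_form[OF V] unfolding n_def by metis
  have rv_t: "rv v N (t * (1 + n * z)) = \<xi>" if "z \<in> maxideal v" for z
    using that xi rv_eq[OF V] rv_form[OF V] unfolding n_def by metis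
  show ?thesis
  proof (cases "n = 0")
    case True
    have "rv v N t = \<xi> \<and> poly f t = 0" using xi ft True by simp
    moreover have "x1 = t" if "rv v N x1 = \<xi> \<and> poly f x1 = 0" for x1
      using uniq_form that True by auto
    ultimately show ?thesis by blast
  next
    case nN: False
    define S where "S = (\<Sum>i\<in>{1..d}. of_nat i * a i * t ^ (i - 1))"
    define D where "D = t * S"
    have "rv v N S \<in> rv_sum v N {1..d} (\<lambda>i. rv v N (of_nat i * a i * t ^ (i - 1)))"
      unfolding rv_sum_def S_def by blast
    moreover note assms(5)[unfolded a_def[symmetric] d_def[symmetric] n_def[symmetric] xi
        rv_pow_rv[OF V] rv_mul_rv[OF V] rv_ord_rv[OF V]]
    ultimately have "rv_ord v (rv v N S) \<le> Min ({vord v (a i * t ^ (i - 1)) | i. 1 \<le> i \<and> i \<le> d} \<union> {Pinf}) + vord v n"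
      by (rule bspec[rotated])
    then have h5: "vord v S \<le> Min ({vord v (a i * t ^ (i - 1)) | i. 1 \<le> i \<and> i \<le> d} \<union> {Pinf}) + vord v n"
      by (simp only: rv_ord_rv[OF V])
    have fin: "finite ({vord v (a i * t ^ (i - 1)) | i. 1 \<le> i \<and> i \<le> d} \<union> {Pinf})"
    proof -
      have "{vord v (a i * t ^ (i - 1)) | i. 1 \<le> i \<and> i \<le> d} = (\<lambda>i. vord v (a i * t ^ (i - 1))) ` {1..d}"
        by auto
      then show ?thesis by simp
    qed
    have bnd: "vord v S \<le> vord v (a i * t ^ (i - 1)) + vord v n" if "i \<in> {1..d}" for i
    proof -
      have "Min ({vord v (a i * t ^ (i - 1)) | i. 1 \<le> i \<and> i \<le> d} \<union> {Pinf}) \<le> vord v (a i * t ^ (i - 1))"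
        using that fin by (intro Min_le) auto
      then show ?thesis using h5 add_right_mono order_trans by blast
    qed
    have bnd2: "S \<noteq> 0 \<and> v D \<le> v (a i * t ^ i * n)" if "i \<in> {1..d}" "a i \<noteq> 0" for i
    proof -
      have nz: "a i * t ^ (i - 1) \<noteq> 0" using that \<open>t \<noteq> 0\<close> by simp
      have "vord v S \<le> Fin (v (a i * t ^ (i - 1)) + v n)"
        using bnd[OF that(1)] nz nN \<open>t \<noteq> 0\<close> unfolding vord_def by simp
      then have S0: "S \<noteq> 0" and le: "v S \<le> v (a i * t ^ (i - 1)) + v n"
        unfolding vord_def by (auto split: if_splits)
      have ti: "a i * t ^ i * n = (a i * t ^ (i - 1) * n) * t"
        using that(1) by (cases i) (auto simp: algebra_simps)
      have "v D = v t + v S" unfolding D_def using vmul[OF V] S0 \<open>t \<noteq> 0\<close> by simp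
      also have "\<dots> \<le> v t + (v (a i * t ^ (i - 1)) + v n)" using le by simp
      also have "\<dots> = v (a i * t ^ i * n)"
        unfolding ti using vmul[OF V] nz nN \<open>t \<noteq> 0\<close> by (simp add: algebra_simps)
      finally show ?thesis using S0 by simp
    qed
    have ad: "a d \<noteq> 0" using assms(2) unfolding a_def d_def by simp
    have n2m: "n^2 * m i \<in> maxideal v" if "i \<in> {0..d}" for i
    proof -
      have "n * (n * m i) \<in> maxideal v"
        unfolding n_def using M_mul[OF V O_nat[OF V] M_mul[OF V O_nat[OF V] m(1)[OF that]]] .
      then show ?thesis by (simp add: power2_eq_square mult.assoc)
    qed
    have d1: "d \<ge> 1"
    proof (rule ccontr)
      assume "\<not> d \<ge> 1"
      then have "d = 0" by simp
      then have "a 0 * (1 + n^2 * m 0) = 0" using key1 by simp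
      then show False using ad \<open>d = 0\<close> unit_nz[OF V n2m[of 0]] by simp
    qed
    have D0: "D \<noteq> 0" using bnd2[of d] d1 ad \<open>t \<noteq> 0\<close> unfolding D_def by simp
    have Dn: "D * n \<noteq> 0" using D0 nN by simp
    define u where "u i = a i * t ^ i * n / D" for i
    have uO1: "u i \<in> valring v" if "i \<in> {1..d}" for i
    proof (cases "a i = 0")
      case True then show ?thesis unfolding u_def using O_0[OF V] by simp
    next
      case False
      then show ?thesis unfolding u_def using O_div[OF V D0, of "a i * t ^ i * n"] bnd2[OF that False]
        \<open>t \<noteq> 0\<close> nN by simp
    qed
    have split0: "(\<Sum>i\<in>{0..d}. g i) = g 0 + (\<Sum>i\<in>{1..d}. g i)" for g :: "nat \<Rightarrow> 'a"
      by (simp add: sum.atLeast_Suc_atMost)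
    have "u 0 * (1 + n^2 * m 0) = - (\<Sum>i\<in>{1..d}. u i * (1 + n^2 * m i))"
    proof -
      have "(\<Sum>i\<in>{0..d}. u i * (1 + n^2 * m i)) = (\<Sum>i\<in>{0..d}. a i * t ^ i * (1 + n^2 * m i)) * (n / D)"
        unfolding u_def sum_distrib_right by (rule sum.cong) auto
      then have "(\<Sum>i\<in>{0..d}. u i * (1 + n^2 * m i)) = 0" using key1 by simp
      then show ?thesis unfolding split0 by (simp add: eq_neg_iff_add_eq_0)
    qed
    moreover have "- (\<Sum>i\<in>{1..d}. u i * (1 + n^2 * m i)) \<in> valring v"
    proof -
      have "u i * (1 + n^2 * m i) \<in> valring v" if "i \<in> {1..d}" for i
        using uO1[OF that] n2m[of i] that O_mul[OF V] O_add[OF V] O_1[OF V] M_O[OF V] by simp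
      then show ?thesis by (intro O_neg[OF V] O_sum[OF V])
    qed
    ultimately have "u 0 \<in> valring v" using unit_O[OF V n2m[of 0]] by simp
    then have uO: "u i \<in> valring v" if "i \<in> {0..d}" for i
      using uO1 that by (cases "i = 0") auto
    define e where "e j = (\<Sum>i\<in>{0..d}. a i * t ^ i * of_nat (i choose j) * n ^ j) / (D * n)" for j
    have "(\<Sum>i\<in>{0..d}. u i * m i) = n^2 * (\<Sum>i\<in>{0..d}. a i * t ^ i * m i) / (D * n)"
      unfolding u_def sum_divide_distrib sum_distrib_left
      by (rule sum.cong) (use D0 nN in \<open>auto simp: field_simps power2_eq_square\<close>)
    then have e0: "e 0 = - (\<Sum>i\<in>{0..d}. u i * m i)"
      unfolding e_def using ft polyf[of t] by simp
    have eM: "e 0 \<in> maxideal v"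
    proof -
      have "u i * m i \<in> maxideal v" if "i \<in> {0..d}" for i
        using M_mul[OF V uO[OF that] m(1)[OF that]] .
      then show ?thesis unfolding e0 by (intro M_neg[OF V] M_sum[OF V])
    qed
    have Dsum: "D = (\<Sum>i\<in>{0..d}. a i * t ^ i * of_nat i)"
    proof -
      have "D = (\<Sum>i\<in>{1..d}. a i * t ^ i * of_nat i)"
        unfolding D_def S_def sum_distrib_left
        by (rule sum.cong) (auto simp: algebra_simps power_eq_if)
      then show ?thesis unfolding split0 by simp
    qed
    have e1: "e 1 = 1"
      unfolding e_def using Dn by (simp add: Dsum sum_distrib_right)
    have eO: "e j \<in> valring v" if "j \<ge> 2" for j
    proof -
      have "e j = (\<Sum>i\<in>{0..d}. u i * of_nat (i choose j) * n ^ (j - 2))"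
      proof -
        have nj: "n ^ j = n ^ (j - 2) * n * n" using that
          by (metis add.commute le_add_diff_inverse mult.assoc power2_eq_square power_add)
        show ?thesis
          unfolding e_def u_def sum_divide_distrib
          by (rule sum.cong) (use D0 nN nj in \<open>auto simp: field_simps\<close>)
      qed
      moreover have "u i * of_nat (i choose j) * n ^ (j - 2) \<in> valring v" if "i \<in> {0..d}" for i
        using O_mul[OF V O_mul[OF V uO[OF that] O_nat[OF V]] O_pow[OF V O_nat[OF V]]]
        unfolding n_def by blast
      ultimately show ?thesis using O_sum[OF V, of "{0..d}"] by presburger
    qed
    define h where "h = (\<Sum>j\<in>{0..d}. monom (e j) j)"
    have coeffh: "coeff h k = (if k \<le> d then e k else 0)" for k
      unfolding h_def by (simp add: coeff_sum coeff_monom)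
    have polyh: "poly h z = (\<Sum>j\<in>{0..d}. e j * z ^ j)" for z
      unfolding h_def by (simp add: poly_sum poly_monom)
    have binom: "(1 + n * z) ^ i = (\<Sum>k\<in>{0..d}. of_nat (i choose k) * (n * z) ^ k)" if "i \<le> d" for i z
    proof -
      have "(1 + n * z) ^ i = (\<Sum>k\<le>i. of_nat (i choose k) * (n * z) ^ k)"
        using binomial_ring[of "n * z" 1 i] by (simp add: add.commute)
      also have "\<dots> = (\<Sum>k\<in>{0..d}. of_nat (i choose k) * (n * z) ^ k)"
        by (rule sum.mono_neutral_left) (use that in \<open>auto simp: binomial_eq_0\<close>)
      finally show ?thesis .
    qed
    have PH: "poly f (t * (1 + n * z)) = poly h z * (D * n)" for z
    proof -
      have "poly f (t * (1 + n * z)) = (\<Sum>i\<in>{0..d}. a i * t ^ i * (1 + n * z) ^ i)"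
        unfolding polyf by (simp add: power_mult_distrib mult.assoc)
      also have "\<dots> = (\<Sum>i\<in>{0..d}. \<Sum>k\<in>{0..d}. a i * t ^ i * of_nat (i choose k) * n ^ k * z ^ k)"
        by (rule sum.cong) (auto simp: binom sum_distrib_left power_mult_distrib algebra_simps)
      also have "\<dots> = (\<Sum>k\<in>{0..d}. \<Sum>i\<in>{0..d}. a i * t ^ i * of_nat (i choose k) * n ^ k * z ^ k)"
        by (rule sum.swap)
      also have "\<dots> = (\<Sum>k\<in>{0..d}. e k * z ^ k * (D * n))"
      proof (rule sum.cong[OF refl])
        fix k
        have "e k * (D * n) = (\<Sum>i\<in>{0..d}. a i * t ^ i * of_nat (i choose k) * n ^ k)"
          unfolding e_def using Dn by simp
        then show "(\<Sum>i\<in>{0..d}. a i * t ^ i * of_nat (i choose k) * n ^ k * z ^ k) = e k * z ^ k * (D * n)"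
        proof -
          have "(\<Sum>i\<in>{0..d}. a i * t ^ i * of_nat (i choose k) * n ^ k * z ^ k)
              = (\<Sum>i\<in>{0..d}. a i * t ^ i * of_nat (i choose k) * n ^ k) * z ^ k"
            by (simp add: sum_distrib_right)
          also have "\<dots> = e k * (D * n) * z ^ k" using \<open>e k * (D * n) = _\<close> by simp
          finally show ?thesis by (simp add: algebra_simps)
        qed
      qed
      also have "\<dots> = poly h z * (D * n)" unfolding polyh sum_distrib_right ..
      finally show ?thesis .
    qed
    have cO: "coeff h k \<in> valring v" for k
    proof -
      consider "k = 0" | "k = 1" | "k \<ge> 2" by linarith
      then have "e k \<in> valring v"
        by cases (use M_O[OF V eM] e1 O_1[OF V] eO in auto)
      then show ?thesis unfolding coeffh using O_0[OF V] by simp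
    qed
    have ph0: "poly h 0 \<in> maxideal v" using eM by (simp add: poly_0_coeff_0 coeffh)
    have pd0: "poly (pderiv h) 0 \<notin> maxideal v"
      using one_notin_M[OF V] d1 e1 by (simp add: poly_0_coeff_0 coeff_pderiv coeffh)
    obtain b where b: "b \<in> valring v" "poly h b = 0" "b - 0 \<in> maxideal v"
      using H cO O_0[OF V] ph0 pd0 unfolding henselian_def by blast
    have bM: "b \<in> maxideal v" using b(3) by simp
    have ex: "rv v N (t * (1 + n * b)) = \<xi> \<and> poly f (t * (1 + n * b)) = 0"
      using rv_t[OF bM] PH b(2) by simp
    have un: "x1 = t * (1 + n * b)" if x1: "rv v N x1 = \<xi> \<and> poly f x1 = 0" for x1
    proof -
      obtain z where z: "z \<in> maxideal v" "x1 = t * (1 + n * z)" using uniq_form x1 by blast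
      have hz: "poly h z = 0" using PH[of z] x1 z(2) Dn by simp
      define P where "P j = (\<Sum>k<j. b ^ (j - Suc k) * z ^ k)" for j
      define W where "W = (\<Sum>j\<in>{0..d}. e j * P j)"
      have "poly h z - poly h b = (\<Sum>j\<in>{0..d}. e j * z ^ j - e j * b ^ j)"
        unfolding polyh sum_subtractf ..
      also have "\<dots> = (\<Sum>j\<in>{0..d}. (z - b) * (e j * P j))"
      proof (rule sum.cong[OF refl])
        fix j
        have "z ^ j - b ^ j = (z - b) * P j"
          unfolding P_def by (rule power_diff_sumr2)
        then show "e j * z ^ j - e j * b ^ j = (z - b) * (e j * P j)"
          by (metis mult.left_commute right_diff_distrib)
      qed
      also have "\<dots> = (z - b) * W" unfolding W_def sum_distrib_left ..
      finally have "poly h z - poly h b = (z - b) * W" .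
      then have zbW: "(z - b) * W = 0" using hz b(2) by simp
      have PM: "P j \<in> maxideal v" if "j \<ge> 2" for j
        unfolding P_def
      proof (rule M_sum[OF V])
        fix k assume "k \<in> {..<j}"
        then have k: "k < j" by simp
        show "b ^ (j - Suc k) * z ^ k \<in> maxideal v"
        proof (cases "k = 0")
          case True
          then show ?thesis using M_pow[OF V bM, of "j - 1"] that by simp
        next
          case False
          then show ?thesis
            using M_mul[OF V O_pow[OF V M_O[OF V bM]] M_pow[OF V z(1)]] by simp
        qed
      qed
      have trm: "e j * P j - (if j = 1 then 1 else 0) \<in> maxideal v" for j
      proof -
        consider "j = 0" | "j = 1" | "j \<ge> 2" by linarith
        then show ?thesis
        proof cases
          case 1 then show ?thesis using M_0[OF V] by (simp add: P_def)
        next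
          case 2 then show ?thesis using M_0[OF V] e1 by (simp add: P_def)
        next
          case 3 then show ?thesis using M_mul[OF V eO[OF 3] PM[OF 3]] by simp
        qed
      qed
      have "W - 1 = (\<Sum>j\<in>{0..d}. e j * P j - (if j = 1 then 1 else 0))"
        unfolding W_def sum_subtractf using d1 by simp
      also have "\<dots> \<in> maxideal v" by (rule M_sum[OF V], rule trm)
      finally have "1 + (W - 1) \<noteq> 0" by (rule unit_nz[OF V])
      then have "W \<noteq> 0" by simp
      then have "z = b" using zbW by simp
      then show ?thesis using z(2) by simp
    qed
    show ?thesis using ex un by blast
  qed
qed
end
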